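(* Let $(D,s,t,k)$ be a reduced instance of Rooted $k$-Distinct Branchings, let $(\hat T,\{B_x\})$ be the $s$-rooted cut decomposition of $D$, and let $\hat P=x_1\dots x_\ell$ be a degenerate path of $\hat T$. If $x_iu$ and $x_ju$ are two arcs of $A^+\cap R_t$ with $i<j$ (same head $u$), then $(D,s,t,k)$ is a positive instance if and only if $(D-x_ju,s,t,k)$ is a positive instance.
   Context: Digraphs are finite and without loops; paths are directed. An out-tree (in-tree) is an oriented tree with exactly one vertex of in-degree zero (out-degree zero), its root; an out-branching (in-branching) of $D$ is a spanning out-tree (in-tree). An instance $(D,s,t,k)$ of Rooted $k$-Distinct Branchings ($D$ a digraph, $s,t\in V(D)$, $k$ an integer) is positive if $D$ has an out-branching $T^+$ rooted at $s$ and an in-branching $T^-$ rooted at $t$ with $|A(T^+)\setminus A(T^-)|\ge k$. It is reduced if $D$ has an out-branching rooted at $s$, an in-branching rooted at $t$, and every arc of $D$ lies in some out-branching rooted at $s$ or in some in-branching rooted at $t$. $R_s$ is the set of arcs lying in no out-branching rooted at $s$, and $R_t$ the set of arcs lying in no in-branching rooted at $t$. A vertex $v$ is bi-reachable from $r$ if there are two internally vertex-disjoint directed paths from $r$ to $v$. For a digraph $H$ with at least two vertices and $r\in V(H)$ such that every vertex of $H$ is reachable from $r$, the diblock $B_r$ of $r$ in $H$ is the set of all vertices bi-reachable from $r$, together with $r$ and all out-neighbours of $r$. For $x\in B_r\setminus\{r\}$ let $X_x$ be the set of vertices $v\notin B_r$ such that every directed $r$–$v$ path intersects $B_r$ for the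 last time in $x$; $x$ is a bottleneck of $B_r$ if $X_x\ne\emptyset$. The $r$-rooted cut decomposition $(\hat T,\{B_x\}_{x\in V(\hat T)})$ of $H$ is defined recursively: $\hat T$ is a rooted tree with root $r$; the set associated with the root is $B_r$; the children of $r$ are the bottlenecks of $B_r$; for each bottleneck $x$, the subtree rooted at $x$ with its sets is the $x$-rooted cut decomposition of $H[X_x\cup\{x\}]$. $B_x$ is degenerate if $x$ is an internal node of $\hat T$ and $|B_x|=2$. A path $x_1\dots x_\ell$ in $\hat T$ is degenerate if it is a subpath of a root-to-leaf path of $\hat T$ (with $x_{i+1}$ a child of $x_i$) and every $B_{x_i}$ is degenerate. For such a path $\hat P$, $A^+$ is the set of arcs $x_iu$ of $D$ with $x_i\in V(\hat P)$ and $u\notin V(\hat P)$, $u\in B_y$ for some proper ancestor $y$ of $x_1$ in $\hat T$. *)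

theory Defs
  imports Main
begin

definition digraph :: "'a set \<Rightarrow> ('a \<times> 'a) set \<Rightarrow> bool" where
  "digraph V A \<longleftrightarrow> finite V \<and> A \<subseteq> V \<times> V \<and> (\<forall>(u,v)\<in>A. u \<noteq> v)"

definition oriented_tree :: "'a set \<Rightarrow> ('a \<times> 'a) set \<Rightarrow> bool" where
  "oriented_tree V T \<longleftrightarrow> finite V \<and> V \<noteq> {} \<and> T \<subseteq> V \<times> V \<and>
     (\<forall>(u,v)\<in>T. u \<noteq> v \<and> (v,u) \<notin> T) \<and>
     card T = card V - 1 \<and>
     (\<forall>u\<in>V. \<forall>v\<in>V. (u,v) \<in> (T \<union> T\<inverse>)\<^sup>*)"

definition out_branching :: "'a set \<Rightarrow> ('a \<times> 'a) set \<Rightarrow> 'a \<Rightarrow> ('a \<times> 'a) set \<Rightarrow> bool" where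
  "out_branching V A r T \<longleftrightarrow> T \<subseteq> A \<and> oriented_tree V T \<and>
     {v \<in> V. \<not> (\<exists>u. (u,v) \<in> T)} = {r}"

definition in_branching :: "'a set \<Rightarrow> ('a \<times> 'a) set \<Rightarrow> 'a \<Rightarrow> ('a \<times> 'a) set \<Rightarrow> bool" where
  "in_branching V A r T \<longleftrightarrow> T \<subseteq> A \<and> oriented_tree V T \<and>
     {v \<in> V. \<not> (\<exists>w. (v,w) \<in> T)} = {r}"

definition positive_instance :: "'a set \<Rightarrow> ('a \<times> 'a) set \<Rightarrow> 'a \<Rightarrow> 'a \<Rightarrow> int \<Rightarrow> bool" where
  "positive_instance V A s t k \<longleftrightarrow>
     (\<exists>Tp Tm. out_branching V A s Tp \<and> in_branching V A t Tm \<and> int (card (Tp - Tm)) \<ge> k)"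

definition reduced_instance :: "'a set \<Rightarrow> ('a \<times> 'a) set \<Rightarrow> 'a \<Rightarrow> 'a \<Rightarrow> bool" where
  "reduced_instance V A s t \<longleftrightarrow>
     (\<exists>T. out_branching V A s T) \<and> (\<exists>T. in_branching V A t T) \<and>
     (\<forall>a\<in>A. (\<exists>T. out_branching V A s T \<and> a \<in> T) \<or> (\<exists>T. in_branching V A t T \<and> a \<in> T))"

definition R_s :: "'a set \<Rightarrow> ('a \<times> 'a) set \<Rightarrow> 'a \<Rightarrow> ('a \<times> 'a) set" where
  "R_s V A s = {a \<in> A. \<not> (\<exists>T. out_branching V A s T \<and> a \<in> T)}"

definition R_t :: "'a set \<Rightarrow> ('a \<times> 'a) set \<Rightarrow> 'a \<Rightarrow> ('a \<times> 'a) set" where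
  "R_t V A t = {a \<in> A. \<not> (\<exists>T. in_branching V A t T \<and> a \<in> T)}"

definition dpath :: "'a set \<Rightarrow> ('a \<times> 'a) set \<Rightarrow> 'a list \<Rightarrow> 'a \<Rightarrow> 'a \<Rightarrow> bool" where
  "dpath V A p u v \<longleftrightarrow> p \<noteq> [] \<and> hd p = u \<and> last p = v \<and> distinct p \<and> set p \<subseteq> V \<and>
     (\<forall>i. Suc i < length p \<longrightarrow> (p ! i, p ! Suc i) \<in> A)"

definition bireachable :: "'a set \<Rightarrow> ('a \<times> 'a) set \<Rightarrow> 'a \<Rightarrow> 'a \<Rightarrow> bool" where
  "bireachable V A r v \<longleftrightarrow>
     (\<exists>p q. dpath V A p r v \<and> dpath V A q r v \<and> p \<noteq> q \<and> set p \<inter> set q = {r, v})"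

definition diblock :: "'a set \<Rightarrow> ('a \<times> 'a) set \<Rightarrow> 'a \<Rightarrow> 'a set" where
  "diblock V A r = {r} \<union> {v. (r,v) \<in> A} \<union> {v \<in> V. bireachable V A r v}"

definition Xset :: "'a set \<Rightarrow> ('a \<times> 'a) set \<Rightarrow> 'a \<Rightarrow> 'a \<Rightarrow> 'a set" where
  "Xset V A r x = {v \<in> V - diblock V A r.
     \<forall>p. dpath V A p r v \<longrightarrow> last (filter (\<lambda>w. w \<in> diblock V A r) p) = x}"

definition bottlenecks :: "'a set \<Rightarrow> ('a \<times> 'a) set \<Rightarrow> 'a \<Rightarrow> 'a set" where
  "bottlenecks V A r = {x \<in> diblock V A r - {r}. Xset V A r x \<noteq> {}}"

text \<open>The nodes of the decomposition tree are vertices. A decomposition is represented by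
  its node set N, a parent function par (meaningful on N minus the root) and the sets B.
  cut_decomp V A r N par B holds iff (N, par, B) is the r-rooted cut decomposition of (V, A).\<close>

inductive cut_decomp ::
  "'a set \<Rightarrow> ('a \<times> 'a) set \<Rightarrow> 'a \<Rightarrow> 'a set \<Rightarrow> ('a \<Rightarrow> 'a) \<Rightarrow> ('a \<Rightarrow> 'a set) \<Rightarrow> bool" where
  "\<lbrakk> finite V; 2 \<le> card V; r \<in> V;
     \<forall>v\<in>V. \<exists>p. dpath V A p r v;
     B r = diblock V A r;
     \<forall>x\<in>bottlenecks V A r. par x = r;
     \<forall>x\<in>bottlenecks V A r.
        cut_decomp (Xset V A r x \<union> {x})
                   (A \<inter> ((Xset V A r x \<union> {x}) \<times> (Xset V A r x \<union> {x}))) x (Nx x) par B;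
     N = {r} \<union> (\<Union>x\<in>bottlenecks V A r. Nx x) \<rbrakk>
   \<Longrightarrow> cut_decomp V A r N par B"

definition tree_edges :: "'a set \<Rightarrow> ('a \<Rightarrow> 'a) \<Rightarrow> 'a \<Rightarrow> ('a \<times> 'a) set" where
  "tree_edges N par r = {(par x, x) | x. x \<in> N - {r}}"

definition internal_node :: "'a set \<Rightarrow> ('a \<Rightarrow> 'a) \<Rightarrow> 'a \<Rightarrow> 'a \<Rightarrow> bool" where
  "internal_node N par r x \<longleftrightarrow> x \<in> N \<and> (\<exists>c. (x, c) \<in> tree_edges N par r)"

definition degenerate_node :: "'a set \<Rightarrow> ('a \<Rightarrow> 'a) \<Rightarrow> ('a \<Rightarrow> 'a set) \<Rightarrow> 'a \<Rightarrow> 'a \<Rightarrow> bool" where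
  "degenerate_node N par B r x \<longleftrightarrow> internal_node N par r x \<and> card (B x) = 2"

definition degenerate_path ::
  "'a set \<Rightarrow> ('a \<Rightarrow> 'a) \<Rightarrow> ('a \<Rightarrow> 'a set) \<Rightarrow> 'a \<Rightarrow> 'a list \<Rightarrow> bool" where
  "degenerate_path N par B r xs \<longleftrightarrow> xs \<noteq> [] \<and> set xs \<subseteq> N \<and>
     (\<forall>i. Suc i < length xs \<longrightarrow> (xs ! i, xs ! Suc i) \<in> tree_edges N par r) \<and>
     (\<forall>x\<in>set xs. degenerate_node N par B r x)"

definition Aplus ::
  "('a \<times> 'a) set \<Rightarrow> 'a set \<Rightarrow> ('a \<Rightarrow> 'a) \<Rightarrow> ('a \<Rightarrow> 'a set) \<Rightarrow> 'a \<Rightarrow> 'a list \<Rightarrow> ('a \<times> 'a) set" where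
  "Aplus A N par B r xs = {(x, u) \<in> A. x \<in> set xs \<and> u \<notin> set xs \<and>
     (\<exists>y. (y, hd xs) \<in> (tree_edges N par r)\<^sup>+ \<and> u \<in> B y)}"

end

theory Submission
  imports Defs "HOL-Library.Transitive_Closure_Table"
begin

fun walk :: "('a \<times> 'a) set \<Rightarrow> 'a list \<Rightarrow> bool" where
  "walk A [] = True"
| "walk A [x] = True"
| "walk A (x # y # r) = ((x,y) \<in> A \<and> walk A (y # r))"

lemma walk_idx: "walk A p \<longleftrightarrow> (\<forall>i. Suc i < length p \<longrightarrow> (p ! i, p ! Suc i) \<in> A)"
proof (induction A p rule: walk.induct)
  case (3 A x y r)
  show ?case
  proof
    assume "walk A (x # y # r)"
    then show "\<forall>i. Suc i < length (x # y # r) \<longrightarrow> ((x # y # r) ! i, (x # y # r) ! Suc i) \<in> A"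
      using 3 by (auto simp: nth_Cons split: nat.split)
  next
    assume H: "\<forall>i. Suc i < length (x # y # r) \<longrightarrow> ((x # y # r) ! i, (x # y # r) ! Suc i) \<in> A"
    have "(x,y) \<in> A" using H[rule_format, of 0] by simp
    moreover have "\<forall>i. Suc i < length (y # r) \<longrightarrow> ((y # r) ! i, (y # r) ! Suc i) \<in> A"
      using H by (metis Suc_less_eq length_Cons nth_Cons_Suc)
    ultimately show "walk A (x # y # r)" using 3 by simp
  qed
qed auto

lemma dpath_walk: "dpath V A p a b \<longleftrightarrow> p \<noteq> [] \<and> hd p = a \<and> last p = b \<and> distinct p \<and> set p \<subseteq> V \<and> walk A p"
  unfolding dpath_def walk_idx by blast

lemma walk_append: "walk A (xs @ y # ys) \<longleftrightarrow> walk A (xs @ [y]) \<and> walk A (y # ys)"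
proof (induction xs)
  case (Cons a xs) show ?case
  proof (cases xs)
    case Nil then show ?thesis by simp
  next
    case (Cons b zs)
    have "walk A ((a # xs) @ y # ys) = ((a,b) \<in> A \<and> walk A (xs @ y # ys))" using Cons by simp
    moreover have "walk A ((a # xs) @ [y]) = ((a,b) \<in> A \<and> walk A (xs @ [y]))" using Cons by simp
    ultimately show ?thesis using Cons.IH by simp
  qed
qed simp

lemma walk_mono: "walk A p \<Longrightarrow> A \<subseteq> A' \<Longrightarrow> walk A' p"
  by (induction A p rule: walk.induct) auto

lemma walk_restrict: "walk A p \<Longrightarrow> set p \<subseteq> S \<Longrightarrow> walk (A \<inter> S \<times> S) p"
  by (induction A p rule: walk.induct) auto

lemma walk_snoc: "walk A (xs @ [y]) \<Longrightarrow> (y, z) \<in> A \<Longrightarrow> walk A (xs @ [y, z])"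
  using walk_append[of A xs y "[z]"] by simp

lemma walk_rtrancl: "walk T (z # q) \<Longrightarrow> (z, last (z # q)) \<in> T\<^sup>*"
proof (induction q arbitrary: z)
  case (Cons a q)
  then have "(z,a) \<in> T" "(a, last (a # q)) \<in> T\<^sup>*" by auto
  then show ?case by (simp add: converse_rtrancl_into_rtrancl)
qed simp

lemma dpath_prefix:
  assumes "dpath V A (p1 @ z # p2) a b" shows "dpath V A (p1 @ [z]) a z"
  using assms unfolding dpath_walk walk_append[of A p1 z p2]
  by (cases p1) auto

lemma dpath_suffix:
  assumes "dpath V A (p1 @ z # p2) a b" shows "dpath V A (z # p2) z b"
  using assms unfolding dpath_walk walk_append[of A p1 z p2] by auto

lemma dpath_split:
  assumes "dpath V A p a b" "z \<in> set p"
  obtains p1 p2 where "p = p1 @ z # p2" "dpath V A (p1 @ [z]) a z" "dpath V A (z # p2) z b"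
proof -
  obtain p1 p2 where e: "p = p1 @ z # p2" using split_list[OF assms(2)] by blast
  show ?thesis using that[OF e dpath_prefix[OF assms(1)[unfolded e]] dpath_suffix[OF assms(1)[unfolded e]]] .
qed

lemma dpath_mono: "dpath V A p a b \<Longrightarrow> A \<subseteq> A' \<Longrightarrow> dpath V A' p a b"
  unfolding dpath_walk using walk_mono by blast

lemma last_filter_split:
  assumes "filter P p \<noteq> []"
  shows "\<exists>p1 p2. p = p1 @ last (filter P p) # p2 \<and> P (last (filter P p)) \<and> (\<forall>z\<in>set p2. \<not> P z)"
  using assms
proof (induction p rule: rev_induct)
  case Nil then show ?case by simp
next
  case (snoc a q)
  show ?case
  proof (cases "P a")
    case True then show ?thesis by force
  next
    case False
    then have "filter P (q @ [a]) = filter P q" by simp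
    with snoc obtain p1 p2 where "q = p1 @ last (filter P q) # p2" "P (last (filter P q))" "\<forall>z\<in>set p2. \<not> P z"
      by auto
    then have "q @ [a] = p1 @ last (filter P (q @ [a])) # (p2 @ [a])"
      using \<open>filter P (q @ [a]) = filter P q\<close> by simp
    then show ?thesis using False \<open>filter P (q @ [a]) = filter P q\<close> \<open>P (last (filter P q))\<close>
      \<open>\<forall>z\<in>set p2. \<not> P z\<close> by (intro exI[of _ p1] exI[of _ "p2 @ [a]"]) auto
  qed
qed



definition reach_av :: "'a set \<Rightarrow> ('a \<times> 'a) set \<Rightarrow> 'a \<Rightarrow> 'a \<Rightarrow> 'a \<Rightarrow> bool" where
  "reach_av V A r x b \<longleftrightarrow> (\<exists>p. dpath V A p r b \<and> x \<notin> set p)"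

lemma walk_snoc': "p \<noteq> [] \<Longrightarrow> walk A p \<Longrightarrow> (last p, b) \<in> A \<Longrightarrow> walk A (p @ [b])"
  using walk_snoc[of A "butlast p" "last p" b] by (metis append_butlast_last_id append_Cons append_Nil append_assoc)

lemma reach_av_prefix:
  assumes "dpath V A p r b" "x \<notin> set p" "z \<in> set p" shows "reach_av V A r x z"
proof -
  obtain p1 p2 where "p = p1 @ z # p2" "dpath V A (p1 @ [z]) r z" using dpath_split[OF assms(1,3)] by blast
  then show ?thesis using assms(2) unfolding reach_av_def by (intro exI[of _ "p1 @ [z]"]) auto
qed

lemma reach_av_step:
  assumes "reach_av V A r x a" "(a,b) \<in> A" "b \<in> V" "b \<noteq> x"
  shows "reach_av V A r x b"
proof -
  obtain p where p: "dpath V A p r a" "x \<notin> set p" using assms(1) unfolding reach_av_def by blast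
  show ?thesis
  proof (cases "b \<in> set p")
    case True then show ?thesis using reach_av_prefix p by metis
  next
    case False
    have "dpath V A (p @ [b]) r b"
      using p(1) False assms(2,3) unfolding dpath_walk by (auto intro: walk_snoc')
    then show ?thesis using p(2) assms(4) unfolding reach_av_def by (intro exI[of _ "p @ [b]"]) auto
  qed
qed

lemma reach_av_path:
  "reach_av V A r x a \<Longrightarrow> walk A (a # Q) \<Longrightarrow> set Q \<subseteq> V \<Longrightarrow> x \<notin> set Q \<Longrightarrow> reach_av V A r x (last (a # Q))"
proof (induction Q arbitrary: a)
  case (Cons c Q)
  then have "reach_av V A r x c" using reach_av_step[of V A r x a c] by auto
  with Cons show ?case by auto
qed simp

lemma not_reach_av_self: "\<not> reach_av V A r x x"
  unfolding reach_av_def dpath_def by auto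

lemma reach_av_before:
  assumes "dpath V A Q r x" "z \<in> set Q" "z \<noteq> x" shows "reach_av V A r x z"
proof -
  obtain q1 q2 where e: "Q = q1 @ z # q2" "dpath V A (q1 @ [z]) r z" using dpath_split[OF assms(1,2)] by blast
  have "x = last Q" using assms(1) unfolding dpath_walk by simp
  then have "x \<in> set q2" using e(1) assms(3) by (cases q2) auto
  then have "x \<notin> set (q1 @ [z])" using assms(1) e(1) assms(3) unfolding dpath_walk by auto
  then show ?thesis using e(2) unfolding reach_av_def by blast
qed

lemma B_paths:
  assumes "A \<subseteq> V \<times> V" "r \<in> V" "x \<in> diblock V A r" "x \<noteq> r"
  shows "\<exists>P1 P2. dpath V A P1 r x \<and> dpath V A P2 r x \<and> set P1 \<inter> set P2 = {r, x}"
proof (cases "(r,x) \<in> A")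
  case True
  then have "dpath V A [r,x] r x" using assms unfolding dpath_walk by auto
  moreover have "set [r,x] \<inter> set [r,x] = {r,x}" by auto
  ultimately show ?thesis by blast
next
  case False
  then have "bireachable V A r x" using assms(3,4) unfolding diblock_def by auto
  then show ?thesis unfolding bireachable_def by blast
qed

lemma bireach_in:
  "dpath V A \<alpha> r y \<Longrightarrow> dpath V A \<beta> r y \<Longrightarrow> \<alpha> \<noteq> \<beta> \<Longrightarrow> set \<alpha> \<inter> set \<beta> = {r, y} \<Longrightarrow> y \<in> V
   \<Longrightarrow> y \<in> diblock V A r"
  unfolding diblock_def bireachable_def by blast



lemma beta_path:
  assumes P2: "dpath V A P2 r x"
    and R: "dpath V A R x w" and Rdom: "\<forall>z\<in>set R. \<not> reach_av V A r x z"
    and wy: "(w,y) \<in> A" and yV: "y \<in> V" and yP2: "y \<notin> set P2" and yR: "y \<notin> set R"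
  shows "dpath V A (P2 @ tl R @ [y]) r y \<and> x \<in> set (P2 @ tl R @ [y])
    \<and> set (P2 @ tl R @ [y]) = set P2 \<union> set R \<union> {y}"
proof -
  obtain R' where Re: "R = x # R'" using R unfolding dpath_walk by (cases R) auto
  have P2e: "P2 = butlast P2 @ [x]" using P2 unfolding dpath_walk by auto
  have disj: "set P2 \<inter> set R' = {}"
  proof (rule ccontr)
    assume "set P2 \<inter> set R' \<noteq> {}"
    then obtain z where z: "z \<in> set P2" "z \<in> set R'" by blast
    have "z \<noteq> x" using z(2) R Re unfolding dpath_walk by auto
    then have "reach_av V A r x z" using reach_av_before[OF P2 z(1)] by blast
    then show False using Rdom Re z(2) by auto
  qed
  have wR: "walk A (R @ [y])" using R wy unfolding dpath_walk by (auto intro: walk_snoc')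
  have eq: "P2 @ tl R @ [y] = butlast P2 @ x # (R' @ [y])"
    using arg_cong[OF P2e, of "\<lambda>L. L @ (R' @ [y])"] Re by simp
  have w1: "walk A (butlast P2 @ [x])" using P2 P2e unfolding dpath_walk by metis
  have w2: "walk A (x # (R' @ [y]))" using wR Re by simp
  have w: "walk A (P2 @ tl R @ [y])" unfolding eq walk_append[of A "butlast P2" x "R' @ [y]"] using w1 w2 by simp
  have "distinct (P2 @ tl R @ [y])" using P2 R Re disj yP2 yR unfolding dpath_walk by auto
  moreover have "P2 @ tl R @ [y] \<noteq> []" by simp
  moreover have "hd (P2 @ tl R @ [y]) = r" using P2 unfolding dpath_walk by auto
  moreover have "set (P2 @ tl R @ [y]) \<subseteq> V" using P2 R yV Re unfolding dpath_walk by auto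
  ultimately have "dpath V A (P2 @ tl R @ [y]) r y" using w unfolding dpath_walk by simp
  moreover have "x \<in> set (P2 @ tl R @ [y])" using P2 unfolding dpath_walk by (auto intro: last_in_set)
  ultimately show ?thesis using Re by auto
qed

lemma caseA:
  assumes P1: "dpath V A P1 r x" and P2: "dpath V A P2 r x" and P12: "set P1 \<inter> set P2 = {r, x}"
    and R: "dpath V A R x w" and Rdom: "\<forall>z\<in>set R. \<not> reach_av V A r x z"
    and wy: "(w,y) \<in> A" and yV: "y \<in> V" and yB: "y \<notin> diblock V A r"
    and yR: "y \<notin> set R" and yx: "y \<noteq> x"
    and yP1: "y \<in> set P1"
  shows False
proof -
  have yr: "y \<noteq> r" using yB unfolding diblock_def by auto
  have yP2: "y \<notin> set P2" using yP1 P12 yr yx by auto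
  obtain a1 a2 where ae: "P1 = a1 @ y # a2" and al: "dpath V A (a1 @ [y]) r y"
    using dpath_split[OF P1 yP1] by blast
  have "x = last P1" using P1 unfolding dpath_walk by simp
  then have "x \<in> set a2" using ae yx by (cases a2) auto
  then have xa: "x \<notin> set (a1 @ [y])" using P1 ae yx unfolding dpath_walk by auto
  define \<beta> where "\<beta> = P2 @ tl R @ [y]"
  have b: "dpath V A \<beta> r y" "x \<in> set \<beta>" "set \<beta> = set P2 \<union> set R \<union> {y}"
    using beta_path[OF P2 R Rdom wy yV yP2 yR] unfolding \<beta>_def by auto
  have "set (a1 @ [y]) \<inter> set \<beta> \<subseteq> {r, y}"
  proof
    fix z assume z: "z \<in> set (a1 @ [y]) \<inter> set \<beta>"
    have zP1: "z \<in> set P1" using z ae by auto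
    have zx: "z \<noteq> x" using z xa by auto
    show "z \<in> {r, y}"
    proof -
      have "z \<in> set P2 \<or> z \<in> set R \<or> z = y" using z b(3) by auto
      moreover have "z \<notin> set R" using reach_av_before[OF P1 zP1 zx] Rdom by auto
      moreover have "z \<in> set P2 \<Longrightarrow> z = r" using zP1 P12 zx by auto
      ultimately show ?thesis by auto
    qed
  qed
  moreover have "r \<in> set (a1 @ [y])" using al unfolding dpath_walk by (metis hd_in_set)
  moreover have "r \<in> set \<beta>" using b(1) unfolding dpath_walk by (metis hd_in_set)
  moreover have "y \<in> set \<beta>" using b(1) unfolding dpath_walk by (metis last_in_set)
  ultimately have "set (a1 @ [y]) \<inter> set \<beta> = {r, y}" by auto
  moreover have "a1 @ [y] \<noteq> \<beta>" using xa b(2) by auto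
  ultimately have "y \<in> diblock V A r" using bireach_in[OF al b(1)] yV by blast
  then show False using yB by simp
qed

lemma caseC:
  assumes P1: "dpath V A P1 r x" and P2: "dpath V A P2 r x" and P12: "set P1 \<inter> set P2 = {r, x}"
    and R: "dpath V A R x w" and Rdom: "\<forall>z\<in>set R. \<not> reach_av V A r x z"
    and wy: "(w,y) \<in> A" and yV: "y \<in> V" and yB: "y \<notin> diblock V A r"
    and yR: "y \<notin> set R" and yP1: "y \<notin> set P1" and yP2: "y \<notin> set P2"
    and P: "dpath V A P r y" and xP: "x \<notin> set P"
    and Pe: "P = p1 @ v # p2" and vP1: "v \<in> set P1"
    and p2S: "\<forall>z\<in>set p2. z \<notin> set P1 \<union> set P2 \<union> set R"
  shows False
proof -
  have vx: "v \<noteq> x" using xP Pe by auto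
  obtain b1 b2 where be: "P1 = b1 @ v # b2" and bl: "dpath V A (b1 @ [v]) r v"
    using dpath_split[OF P1 vP1] by blast
  have "x = last P1" using P1 unfolding dpath_walk by simp
  then have "x \<in> set b2" using be vx by (cases b2) auto
  then have xb: "x \<notin> set (b1 @ [v])" using P1 be vx unfolding dpath_walk by auto
  have suf: "dpath V A (v # p2) v y" using dpath_suffix P Pe by metis
  define \<alpha> where "\<alpha> = b1 @ v # p2"
  have "walk A \<alpha>" unfolding \<alpha>_def walk_append[of A b1 v p2] using bl suf unfolding dpath_walk by auto
  moreover have "distinct \<alpha>" unfolding \<alpha>_def using bl suf p2S be unfolding dpath_walk by auto
  moreover have "hd \<alpha> = r" using bl unfolding \<alpha>_def dpath_walk by (cases b1) auto
  moreover have "last \<alpha> = y" using suf unfolding \<alpha>_def dpath_walk by auto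
  moreover have "set \<alpha> \<subseteq> V" using bl suf unfolding \<alpha>_def dpath_walk by auto
  ultimately have al: "dpath V A \<alpha> r y" unfolding dpath_walk \<alpha>_def by simp
  have xal: "x \<notin> set \<alpha>" using xb xP Pe unfolding \<alpha>_def by auto
  define \<beta> where "\<beta> = P2 @ tl R @ [y]"
  have b: "dpath V A \<beta> r y" "x \<in> set \<beta>" "set \<beta> = set P2 \<union> set R \<union> {y}"
    using beta_path[OF P2 R Rdom wy yV yP2 yR] unfolding \<beta>_def by auto
  have "set \<alpha> \<inter> set \<beta> \<subseteq> {r, y}"
  proof
    fix z assume z: "z \<in> set \<alpha> \<inter> set \<beta>"
    show "z \<in> {r, y}"
    proof (cases "z \<in> set p2")
      case True then show ?thesis using p2S z b(3) by auto
    next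
      case False
      then have zP1: "z \<in> set P1" using z be unfolding \<alpha>_def by auto
      have zx: "z \<noteq> x" using z xal by auto
      have "z \<in> set P2 \<or> z \<in> set R \<or> z = y" using z b(3) by auto
      moreover have "z \<notin> set R" using reach_av_before[OF P1 zP1 zx] Rdom by auto
      moreover have "z \<in> set P2 \<Longrightarrow> z = r" using zP1 P12 zx by auto
      ultimately show ?thesis by auto
    qed
  qed
  moreover have "r \<in> set \<alpha>" using al unfolding dpath_walk by (metis hd_in_set)
  moreover have "y \<in> set \<alpha>" using al unfolding dpath_walk by (metis last_in_set)
  moreover have "r \<in> set \<beta>" using b(1) unfolding dpath_walk by (metis hd_in_set)
  moreover have "y \<in> set \<beta>" using b(1) unfolding dpath_walk by (metis last_in_set)
  ultimately have "set \<alpha> \<inter> set \<beta> = {r, y}" by auto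
  moreover have "\<alpha> \<noteq> \<beta>" using xal b(2) by auto
  ultimately have "y \<in> diblock V A r" using bireach_in[OF al b(1)] yV by blast
  then show False using yB by simp
qed



lemma G_step:
  assumes AV: "A \<subseteq> V \<times> V" and rV: "r \<in> V" and xB: "x \<in> diblock V A r" and xr: "x \<noteq> r"
    and R: "dpath V A R x w" and Rdom: "\<forall>z\<in>set R. \<not> reach_av V A r x z"
    and wy: "(w,y) \<in> A" and yB: "y \<notin> diblock V A r"
  shows "\<not> reach_av V A r x y"
proof
  assume ry: "reach_av V A r x y"
  then obtain P where P: "dpath V A P r y" "x \<notin> set P" by (auto simp: reach_av_def)
  have yV: "y \<in> V" using wy AV by auto
  have yR: "y \<notin> set R" using Rdom ry by auto
  have "y \<in> set P" using P(1) unfolding dpath_walk by (metis last_in_set)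
  then have yx: "y \<noteq> x" using P(2) by auto
  obtain P1 P2 where P1: "dpath V A P1 r x" and P2: "dpath V A P2 r x" and P12: "set P1 \<inter> set P2 = {r, x}"
    using B_paths[OF AV rV xB xr] by blast
  have P21: "set P2 \<inter> set P1 = {r, x}" using P12 by blast
  show False
  proof (cases "y \<in> set P1")
    case True
    show False using caseA[OF P1 P2 P12 R Rdom wy yV yB yR yx True] .
  next
    case F1: False
    show False
    proof (cases "y \<in> set P2")
      case True
      show False using caseA[OF P2 P1 P21 R Rdom wy yV yB yR yx True] .
    next
      case F2: False
      define S where "S = set P1 \<union> set P2 \<union> set R"
      have rP: "r \<in> set P" using P(1) unfolding dpath_walk by (metis hd_in_set)
      have rP1: "r \<in> set P1" using P1 unfolding dpath_walk by (metis hd_in_set)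
      have "\<exists>z\<in>set P. z \<in> S" using rP rP1 unfolding S_def by blast
      then obtain p1 v p2 where Pe: "P = p1 @ v # p2" and vS: "v \<in> S" and p2S: "\<forall>z\<in>set p2. \<not> z \<in> S"
        using split_list_last_prop[of P "\<lambda>z. z \<in> S"] by blast
      have vP: "v \<in> set P" using Pe by simp
      have "v \<notin> set R" using reach_av_prefix[OF P(1) P(2) vP] Rdom by auto
      then have "v \<in> set P1 \<or> v \<in> set P2" using vS unfolding S_def by auto
      then show False
      proof
        assume vP1: "v \<in> set P1"
        have p2S': "\<forall>z\<in>set p2. z \<notin> set P1 \<union> set P2 \<union> set R" using p2S unfolding S_def by blast
        show False using caseC[OF P1 P2 P12 R Rdom wy yV yB yR F1 F2 P(1) P(2) Pe vP1 p2S'] .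
      next
        assume vP2: "v \<in> set P2"
        have p2S': "\<forall>z\<in>set p2. z \<notin> set P2 \<union> set P1 \<union> set R" using p2S unfolding S_def by blast
        show False using caseC[OF P2 P1 P21 R Rdom wy yV yB yR F2 F1 P(1) P(2) Pe vP2 p2S'] .
      qed
    qed
  qed
qed

lemma G_path:
  assumes AV: "A \<subseteq> V \<times> V" and rV: "r \<in> V" and xB: "x \<in> diblock V A r" and xr: "x \<noteq> r"
  shows "dpath V A Q x y \<Longrightarrow> (\<forall>z\<in>set Q. z \<noteq> x \<longrightarrow> z \<notin> diblock V A r)
     \<Longrightarrow> \<forall>z\<in>set Q. \<not> reach_av V A r x z"
proof (induction Q arbitrary: y rule: rev_induct)
  case Nil then show ?case by (simp add: dpath_walk)
next
  case (snoc a Q')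
  show ?case
  proof (cases "Q' = []")
    case True
    then have "a = x" using snoc.prems(1) unfolding dpath_walk by simp
    then show ?thesis using True not_reach_av_self by simp
  next
    case False
    have e: "Q' @ [a] = butlast Q' @ last Q' # [a]" using False by simp
    have d1: "dpath V A (butlast Q' @ last Q' # [a]) x y" using snoc.prems(1) e by metis
    have dQ: "dpath V A Q' x (last Q')"
      using dpath_prefix[OF d1] False by simp
    have IH: "\<forall>z\<in>set Q'. \<not> reach_av V A r x z"
      using snoc.IH[OF dQ] snoc.prems(2) by simp
    have "walk A (last Q' # [a])"
      using snoc.prems(1) e walk_append[of A "butlast Q'" "last Q'" "[a]"] unfolding dpath_walk by metis
    then have arc: "(last Q', a) \<in> A" by simp
    have "x \<in> set Q'" using dQ unfolding dpath_walk by (metis hd_in_set)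
    moreover have "distinct (Q' @ [a])" using snoc.prems(1) unfolding dpath_walk by blast
    ultimately have "a \<noteq> x" by auto
    then have "a \<notin> diblock V A r" using snoc.prems(2) by simp
    then have "\<not> reach_av V A r x a" using G_step[OF AV rV xB xr dQ IH arc] by simp
    then show ?thesis using IH by simp
  qed
qed

lemma r_in_diblock: "r \<in> diblock V A r" unfolding diblock_def by simp

lemma unique_last:
  assumes AV: "A \<subseteq> V \<times> V" and rV: "r \<in> V" and xB: "x \<in> diblock V A r" and xr: "x \<noteq> r"
    and p: "dpath V A (p1 @ x # p2) r w" and p2B: "\<forall>z\<in>set p2. z \<notin> diblock V A r"
    and p': "dpath V A p' r w"
  shows "last (filter (\<lambda>z. z \<in> diblock V A r) p') = x"
proof (rule ccontr)
  let ?B = "diblock V A r"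
  assume ne: "last (filter (\<lambda>z. z \<in> ?B) p') \<noteq> x"
  have Q: "dpath V A (x # p2) x w" using dpath_suffix[OF p] .
  have "\<forall>z\<in>set (x # p2). z \<noteq> x \<longrightarrow> z \<notin> ?B" using p2B by simp
  then have dom: "\<forall>z\<in>set (x # p2). \<not> reach_av V A r x z" using G_path[OF AV rV xB xr Q] by blast
  have "w \<in> set (x # p2)" using Q unfolding dpath_walk by (metis last_in_set)
  then have "\<not> reach_av V A r x w" using dom by blast
  then have xp': "x \<in> set p'" using p' unfolding reach_av_def by blast
  have hp': "hd p' = r" "p' \<noteq> []" "distinct p'" using p' unfolding dpath_walk by auto
  have "r \<in> set p'" using hp' by (metis hd_in_set)
  then have "filter (\<lambda>z. z \<in> ?B) p' \<noteq> []" using r_in_diblock[of r V A]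
    by (metis (mono_tags, lifting) empty_iff filter_empty_conv)
  from last_filter_split[OF this] obtain q1 q2 where
    qe: "p' = q1 @ last (filter (\<lambda>z. z \<in> ?B) p') # q2" and x2B: "last (filter (\<lambda>z. z \<in> ?B) p') \<in> ?B"
    and q2B: "\<forall>z\<in>set q2. z \<notin> ?B" by blast
  define x2 where "x2 = last (filter (\<lambda>z. z \<in> ?B) p')"
  have qe': "p' = q1 @ x2 # q2" using qe unfolding x2_def .
  have "x \<notin> set q2" using q2B xB by blast
  moreover have ne': "x2 \<noteq> x" using ne unfolding x2_def .
  ultimately have xq1: "x \<in> set q1" using xp' qe' by auto
  have x2r: "x2 \<noteq> r"
  proof
    assume "x2 = r"
    have "q1 \<noteq> []" using xq1 by auto
    then have "hd q1 = r" using hp'(1) qe' by simp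
    then have "r \<in> set q1" using \<open>q1 \<noteq> []\<close> by (metis hd_in_set)
    then show False using hp'(3) qe' \<open>x2 = r\<close> by auto
  qed
  have x2B': "x2 \<in> ?B" using x2B unfolding x2_def .
  obtain P1 P2 where P1: "dpath V A P1 r x2" and P2: "dpath V A P2 r x2" and P12: "set P1 \<inter> set P2 = {r, x2}"
    using B_paths[OF AV rV x2B' x2r] by blast
  have "x \<notin> {r, x2}" using xr ne unfolding x2_def by auto
  then have "x \<notin> set P1 \<or> x \<notin> set P2" using P12 by blast
  then have ra: "reach_av V A r x x2" using P1 P2 unfolding reach_av_def by blast
  have suf: "dpath V A (x2 # q2) x2 w" using dpath_suffix p' qe' by metis
  have "reach_av V A r x (last (x2 # q2))"
    using reach_av_path[OF ra] suf \<open>x \<notin> set q2\<close> unfolding dpath_walk by auto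
  moreover have "last (x2 # q2) = w" using suf unfolding dpath_walk by simp
  ultimately show False using \<open>\<not> reach_av V A r x w\<close> by simp
qed



lemma diblock_sub: "A \<subseteq> V \<times> V \<Longrightarrow> r \<in> V \<Longrightarrow> diblock V A r \<subseteq> V"
  unfolding diblock_def by auto

lemma cd_dom:
  assumes "cut_decomp V A r N par B"
  shows "A \<subseteq> V \<times> V \<Longrightarrow> N \<subseteq> V \<and> r \<in> N \<and>
    (\<forall>c\<in>N - {r}. par c \<noteq> c \<and> (\<forall>p. dpath V A p r c \<longrightarrow> par c \<in> set p))"
  using assms
proof (induction rule: cut_decomp.induct)
  case (1 V r A B par Nx N)
  let ?Bd = "diblock V A r"
  have AV: "A \<subseteq> V \<times> V" by fact
  note rV = \<open>r \<in> V\<close>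
  have IH: "\<And>x. x \<in> bottlenecks V A r \<Longrightarrow> Nx x \<subseteq> Xset V A r x \<union> {x} \<and> x \<in> Nx x \<and>
     (\<forall>c\<in>Nx x - {x}. par c \<noteq> c \<and> (\<forall>p. dpath (Xset V A r x \<union> {x})
        (A \<inter> (Xset V A r x \<union> {x}) \<times> (Xset V A r x \<union> {x})) p x c \<longrightarrow> par c \<in> set p))"
  proof -
    fix x assume xb: "x \<in> bottlenecks V A r"
    let ?V' = "Xset V A r x \<union> {x}"
    have "A \<inter> ?V' \<times> ?V' \<subseteq> ?V' \<times> ?V'" by blast
    then show "?thesis x" using 1(8) xb by blast
  qed
  have bV: "\<And>x. x \<in> bottlenecks V A r \<Longrightarrow> x \<in> V \<and> x \<in> ?Bd \<and> x \<noteq> r"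
    using diblock_sub[OF AV rV] unfolding bottlenecks_def by auto
  have XV: "\<And>x. Xset V A r x \<subseteq> V" unfolding Xset_def by auto
  have NV: "N \<subseteq> V" using IH bV XV \<open>N = _\<close> rV by blast
  have main: "\<forall>c\<in>N - {r}. par c \<noteq> c \<and> (\<forall>p. dpath V A p r c \<longrightarrow> par c \<in> set p)"
  proof
    fix c assume c: "c \<in> N - {r}"
    then obtain x where xb: "x \<in> bottlenecks V A r" and cN: "c \<in> Nx x" using \<open>N = _\<close> by auto
    have x: "x \<in> V" "x \<in> ?Bd" "x \<noteq> r" using bV[OF xb] by auto
    show "par c \<noteq> c \<and> (\<forall>p. dpath V A p r c \<longrightarrow> par c \<in> set p)"
    proof (cases "c = x")
      case True
      have "par c = r" using True xb 1(6) by auto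
      moreover have "\<forall>p. dpath V A p r c \<longrightarrow> r \<in> set p" unfolding dpath_walk by (auto intro: hd_in_set)
      ultimately show ?thesis using x(3) True by auto
    next
      case False
      let ?V' = "Xset V A r x \<union> {x}"
      have cX: "c \<in> Xset V A r x" using IH[OF xb] cN False by auto
      have pc: "par c \<noteq> c" using IH[OF xb] cN False by auto
      have "\<forall>p. dpath V A p r c \<longrightarrow> par c \<in> set p"
      proof (intro allI impI)
        fix p assume p: "dpath V A p r c"
        have lf: "last (filter (\<lambda>w. w \<in> ?Bd) p) = x" using cX p unfolding Xset_def by auto
        have "r \<in> set p" using p unfolding dpath_walk by (metis hd_in_set)
        then have "filter (\<lambda>w. w \<in> ?Bd) p \<noteq> []" using r_in_diblock[of r V A]
          by (metis (mono_tags, lifting) empty_iff filter_empty_conv)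
        from last_filter_split[OF this] obtain p1 p2 where pe: "p = p1 @ x # p2"
          and p2B: "\<forall>z\<in>set p2. z \<notin> ?Bd" using lf by metis
        have sub: "set (x # p2) \<subseteq> ?V'"
        proof
          fix w assume w: "w \<in> set (x # p2)"
          show "w \<in> ?V'"
          proof (cases "w = x")
            case True then show ?thesis by simp
          next
            case False
            then have wp2: "w \<in> set p2" using w by simp
            then obtain s1 s2 where se: "p2 = s1 @ w # s2" by (metis split_list)
            have "dpath V A ((p1 @ x # s1) @ w # s2) r c" using p pe se by simp
            then have dw: "dpath V A (p1 @ x # (s1 @ [w])) r w" using dpath_prefix by fastforce
            have sB: "\<forall>z\<in>set (s1 @ [w]). z \<notin> ?Bd" using p2B se by auto
            have "\<forall>p'. dpath V A p' r w \<longrightarrow> last (filter (\<lambda>z. z \<in> ?Bd) p') = x"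
              using unique_last[OF AV rV x(2) x(3) dw sB] by blast
            moreover have "w \<in> V" "w \<notin> ?Bd" using dw p2B wp2 unfolding dpath_walk by auto
            ultimately have "w \<in> Xset V A r x" unfolding Xset_def by auto
            then show ?thesis by simp
          qed
        qed
        have q: "dpath V A (x # p2) x c" using dpath_suffix p pe by metis
        then have "dpath ?V' (A \<inter> ?V' \<times> ?V') (x # p2) x c"
          using sub walk_restrict unfolding dpath_walk by blast
        then have "par c \<in> set (x # p2)" using IH[OF xb] cN False by blast
        then show "par c \<in> set p" using pe by auto
      qed
      then show ?thesis using pc by blast
    qed
  qed
  show ?case using NV main \<open>N = _\<close> by blast
qed



lemma ob_props:
  assumes ob: "out_branching V A s T"
  shows "T \<subseteq> A" "T \<subseteq> V \<times> V" "finite T" "finite V" "s \<in> V" "\<forall>a. (a,s) \<notin> T"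
    "\<forall>v\<in>V. v \<noteq> s \<longrightarrow> (\<exists>a. (a,v) \<in> T)"
    "\<forall>a b v. (a,v) \<in> T \<longrightarrow> (b,v) \<in> T \<longrightarrow> a = b"
    "card T = card V - 1"
    "\<forall>(a,b)\<in>T. a \<noteq> b \<and> (b,a) \<notin> T"
    "\<forall>u\<in>V. \<forall>v\<in>V. (u,v) \<in> (T \<union> T\<inverse>)\<^sup>*"
proof -
  have ot: "oriented_tree V T" and root: "{v \<in> V. \<not> (\<exists>u. (u,v) \<in> T)} = {s}" and TA: "T \<subseteq> A"
    using ob unfolding out_branching_def by auto
  show "T \<subseteq> A" by fact
  show TV: "T \<subseteq> V \<times> V" using ot unfolding oriented_tree_def by auto
  show fV: "finite V" using ot unfolding oriented_tree_def by auto
  show fT: "finite T" using TV fV by (meson finite_SigmaI finite_subset)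
  show "s \<in> V" using root by auto
  show ns: "\<forall>a. (a,s) \<notin> T" using root by auto
  show ex: "\<forall>v\<in>V. v \<noteq> s \<longrightarrow> (\<exists>a. (a,v) \<in> T)" using root by auto
  show cT: "card T = card V - 1" using ot unfolding oriented_tree_def by auto
  show "\<forall>(a,b)\<in>T. a \<noteq> b \<and> (b,a) \<notin> T" using ot unfolding oriented_tree_def by auto
  show "\<forall>u\<in>V. \<forall>v\<in>V. (u,v) \<in> (T \<union> T\<inverse>)\<^sup>*" using ot unfolding oriented_tree_def by auto
  have "snd ` T = V - {s}"
  proof
    show "snd ` T \<subseteq> V - {s}" using TV ns by auto
    show "V - {s} \<subseteq> snd ` T" using ex by force
  qed
  moreover have "card (V - {s}) = card T" using cT \<open>s \<in> V\<close> fV by simp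
  ultimately have "inj_on snd T" using eq_card_imp_inj_on[OF fT] by metis
  then show "\<forall>a b v. (a,v) \<in> T \<longrightarrow> (b,v) \<in> T \<longrightarrow> a = b"
  proof (intro allI impI)
    fix a b v assume inj: "inj_on snd T" and ab: "(a,v) \<in> T" "(b,v) \<in> T"
    have "(a,v) = (b,v)" using inj_onD[OF inj _ ab] by simp
    then show "a = b" by simp
  qed
qed

lemma ob_reach:
  assumes ob: "out_branching V A s T" and v: "v \<in> V"
  shows "(s,v) \<in> T\<^sup>*"
proof -
  note P = ob_props[OF ob]
  have "(s,v) \<in> (T \<union> T\<inverse>)\<^sup>*" using P(5,11) v by blast
  then show ?thesis
  proof (induction rule: rtrancl_induct)
    case base then show ?case by simp
  next
    case (step y z)
    show ?case
    proof (cases "(y,z) \<in> T")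
      case True then show ?thesis using step.IH by (simp add: rtrancl_into_rtrancl)
    next
      case False
      then have zy: "(z,y) \<in> T" using step.hyps(2) by auto
      then have "y \<noteq> s" using P(6) by auto
      then obtain y' where "(s,y') \<in> T\<^sup>*" "(y',y) \<in> T" using step.IH by (metis rtranclE)
      then show ?thesis using P(8) zy by metis
    qed
  qed
qed

lemma ob_acyclic:
  assumes ob: "out_branching V A s T"
  shows "(v,v) \<notin> T\<^sup>+"
proof
  assume vv: "(v,v) \<in> T\<^sup>+"
  note P = ob_props[OF ob]
  have "v \<in> V" using vv P(2) by (metis (no_types, lifting) SigmaD1 subsetD tranclD)
  then have sv: "(s,v) \<in> T\<^sup>*" using ob_reach[OF ob] by blast
  have "(w,w) \<notin> T\<^sup>+" if "(s,w) \<in> T\<^sup>*" for w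
    using that
  proof (induction rule: rtrancl_induct)
    case base
    show ?case using P(6) by (metis tranclD2)
  next
    case (step y z)
    show ?case
    proof
      assume "(z,z) \<in> T\<^sup>+"
      then obtain y' where "(z,y') \<in> T\<^sup>*" "(y',z) \<in> T" by (metis tranclD2)
      then have "y' = y" using P(8) step.hyps(2) by metis
      then have "(y,y) \<in> T\<^sup>+" using \<open>(z,y') \<in> T\<^sup>*\<close> step.hyps(2) by (metis rtrancl_into_trancl2)
      then show False using step.IH by simp
    qed
  qed
  then show False using sv vv by blast
qed

lemma rpath_walk:
  "rtrancl_path (\<lambda>a b. (a,b) \<in> T) x xs y \<Longrightarrow> walk T (x # xs) \<and> last (x # xs) = y \<and> set xs \<subseteq> snd ` T"
proof (induction rule: rtrancl_path.induct)
  case (base x) then show ?case by simp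
next
  case (step x y ys z)
  have "y \<in> snd ` T" using step.hyps(1) rev_image_eqI[of "(x,y)" T y snd] by simp
  then show ?case using step by (cases ys) auto
qed

lemma ob_path:
  assumes ob: "out_branching V A s T" and v: "v \<in> V"
  shows "\<exists>p. dpath V T p s v \<and> (\<forall>z\<in>set p. (z,v) \<in> T\<^sup>*)"
proof -
  note P = ob_props[OF ob]
  have "(\<lambda>a b. (a,b) \<in> T)\<^sup>*\<^sup>* s v" using ob_reach[OF ob v] by (simp add: rtranclp_rtrancl_eq)
  then obtain xs where "rtrancl_path (\<lambda>a b. (a,b) \<in> T) s xs v" using rtranclp_eq_rtrancl_path by metis
  then obtain xs' where rp: "rtrancl_path (\<lambda>a b. (a,b) \<in> T) s xs' v" and d: "distinct (s # xs')"
    using rtrancl_path_distinct by metis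
  have w: "walk T (s # xs') \<and> last (s # xs') = v \<and> set xs' \<subseteq> snd ` T" using rpath_walk[OF rp] .
  have "snd ` T \<subseteq> V" using P(2) by auto
  then have dp: "dpath V T (s # xs') s v" using w d P(5) unfolding dpath_walk by auto
  have "\<forall>z\<in>set (s # xs'). (z,v) \<in> T\<^sup>*"
  proof
    fix z assume z: "z \<in> set (s # xs')"
    obtain p1 p2 where "dpath V T (z # p2) z v" using dpath_split[OF dp z] by blast
    then show "(z,v) \<in> T\<^sup>*" using walk_rtrancl unfolding dpath_walk by metis
  qed
  then show ?thesis using dp by blast
qed



lemma swap_branching:
  assumes ob: "out_branching V A s T" and dg: "digraph V A"
    and e: "(xj,u) \<in> T" and e'A: "(xi,u) \<in> A" and xij: "xi \<noteq> xj" and na: "(u,xi) \<notin> T\<^sup>*"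
  shows "out_branching V (A - {(xj,u)}) s (insert (xi,u) (T - {(xj,u)})) \<and> (xi,u) \<notin> T"
proof -
  note P = ob_props[OF ob]
  define T0 where "T0 = T - {(xj,u)}"
  define T' where "T' = insert (xi,u) T0"
  have AV: "A \<subseteq> V \<times> V" and loop: "\<forall>(a,b)\<in>A. a \<noteq> b" using dg unfolding digraph_def by auto
  have uV: "u \<in> V" "xi \<in> V" using e'A AV by auto
  have us: "u \<noteq> s" using e P(6) by auto
  have xiu: "xi \<noteq> u" using e'A loop by auto
  have e'T: "(xi,u) \<notin> T" using P(8) e xij by metis
  have uxi: "(u,xi) \<notin> T" using na by auto
  have L1: "(s,v) \<in> T\<^sup>* \<Longrightarrow> (u,v) \<notin> T\<^sup>* \<Longrightarrow> (s,v) \<in> T0\<^sup>*" for v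
  proof (induction rule: rtrancl_induct)
    case base then show ?case by simp
  next
    case (step y z)
    have "(u,y) \<notin> T\<^sup>*" using step.prems step.hyps(2) by (meson rtrancl_into_rtrancl)
    then have "(s,y) \<in> T0\<^sup>*" using step.IH by simp
    moreover have "z \<noteq> u" using step.prems by auto
    then have "(y,z) \<in> T0" using step.hyps(2) unfolding T0_def by auto
    ultimately show ?case by (simp add: rtrancl_into_rtrancl)
  qed
  have L2: "(u,v) \<in> T\<^sup>* \<Longrightarrow> (u,v) \<in> T0\<^sup>*" for v
  proof (induction rule: rtrancl_induct)
    case base then show ?case by simp
  next
    case (step y z)
    show ?case
    proof (cases "(y,z) = (xj,u)")
      case True then show ?thesis by simp
    next
      case False
      then have "(y,z) \<in> T0" using step.hyps(2) unfolding T0_def by auto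
      then show ?thesis using step.IH by (simp add: rtrancl_into_rtrancl)
    qed
  qed
  have T0T': "T0 \<subseteq> T'" unfolding T'_def by auto
  have reach: "(s,v) \<in> T'\<^sup>*" if v: "v \<in> V" for v
  proof (cases "(u,v) \<in> T\<^sup>*")
    case True
    have "(s,xi) \<in> T0\<^sup>*" using L1[OF ob_reach[OF ob uV(2)] na] .
    then have "(s,xi) \<in> T'\<^sup>*" using rtrancl_mono[OF T0T'] by blast
    moreover have "(xi,u) \<in> T'" unfolding T'_def by simp
    ultimately have "(s,u) \<in> T'\<^sup>*" by (simp add: rtrancl_into_rtrancl)
    moreover have "(u,v) \<in> T'\<^sup>*" using L2[OF True] rtrancl_mono[OF T0T'] by blast
    ultimately show ?thesis by simp
  next
    case False
    then show ?thesis using L1[OF ob_reach[OF ob v] False] rtrancl_mono[OF T0T'] by blast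
  qed
  define U where "U = T' \<union> T'\<inverse>"
  have Uc: "U\<inverse> = U" unfolding U_def by auto
  have TU: "T' \<subseteq> U" unfolding U_def by auto
  have conn: "\<forall>a\<in>V. \<forall>b\<in>V. (a,b) \<in> U\<^sup>*"
  proof (intro ballI)
    fix a b assume a: "a \<in> V" and b: "b \<in> V"
    have "(s,a) \<in> U\<^sup>*" using reach[OF a] rtrancl_mono[OF TU] by blast
    then have "(a,s) \<in> (U\<inverse>)\<^sup>*" by (rule rtrancl_converseI)
    then have "(a,s) \<in> U\<^sup>*" using Uc by simp
    moreover have "(s,b) \<in> U\<^sup>*" using reach[OF b] rtrancl_mono[OF TU] by blast
    ultimately show "(a,b) \<in> U\<^sup>*" by simp
  qed
  have fT0: "finite T0" using P(3) unfolding T0_def by simp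
  have "(xi,u) \<notin> T0" using e'T unfolding T0_def by simp
  then have "card T' = Suc (card T0)" unfolding T'_def using fT0 by simp
  moreover have "card T0 = card T - 1" unfolding T0_def using e by (simp add: card_Diff_singleton)
  moreover have "card T > 0" using e P(3) card_gt_0_iff by blast
  ultimately have cT': "card T' = card V - 1" using P(9) by simp
  have T'V: "T' \<subseteq> V \<times> V" unfolding T'_def T0_def using P(2) uV by auto
  have cyc: "\<forall>(a,b)\<in>T'. a \<noteq> b \<and> (b,a) \<notin> T'"
  proof
    fix x assume "x \<in> T'"
    then obtain a b where x: "x = (a,b)" "(a,b) \<in> T'" by (cases x) auto
    show "case x of (a,b) \<Rightarrow> a \<noteq> b \<and> (b,a) \<notin> T'"
    proof (cases "(a,b) = (xi,u)")
      case True
      then show ?thesis using x xiu uxi unfolding T'_def T0_def by auto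
    next
      case False
      then have abT: "(a,b) \<in> T" using x(2) unfolding T'_def T0_def by auto
      then have "a \<noteq> b" "(b,a) \<notin> T" using P(10) by auto
      moreover have "(b,a) \<noteq> (xi,u)" using abT uxi by auto
      ultimately show ?thesis using x unfolding T'_def T0_def by auto
    qed
  qed
  have inarc: "(\<exists>w. (w,v) \<in> T') \<longleftrightarrow> (\<exists>w. (w,v) \<in> T)" for v
    using e unfolding T'_def T0_def by auto
  have "{v \<in> V. \<not> (\<exists>w. (w,v) \<in> T')} = {v \<in> V. \<not> (\<exists>w. (w,v) \<in> T)}" using inarc by simp
  also have "\<dots> = {s}" using ob unfolding out_branching_def by simp
  finally have root: "{v \<in> V. \<not> (\<exists>w. (w,v) \<in> T')} = {s}" .
  have sub: "T' \<subseteq> A - {(xj,u)}" unfolding T'_def T0_def using P(1) e'A xij by auto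
  have "oriented_tree V T'" unfolding oriented_tree_def
    using P(4,5) T'V cyc cT' conn unfolding U_def by blast
  then have "out_branching V (A - {(xj,u)}) s T'" unfolding out_branching_def using sub root by simp
  then show ?thesis using e'T unfolding T'_def T0_def by simp
qed

definition domD :: "'a set \<Rightarrow> ('a \<times> 'a) set \<Rightarrow> 'a \<Rightarrow> 'a \<Rightarrow> 'a \<Rightarrow> bool" where
  "domD V A s a b \<longleftrightarrow> (\<forall>p. dpath V A p s b \<longrightarrow> a \<in> set p)"

lemma domD_refl: "domD V A s a a"
  unfolding domD_def dpath_walk by (auto intro: last_in_set)

lemma domD_trans: "domD V A s a b \<Longrightarrow> domD V A s b c \<Longrightarrow> domD V A s a c"
  unfolding domD_def
proof (intro allI impI)
  fix p assume ab: "\<forall>p. dpath V A p s b \<longrightarrow> a \<in> set p" and bc: "\<forall>p. dpath V A p s c \<longrightarrow> b \<in> set p"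
    and p: "dpath V A p s c"
  have "b \<in> set p" using bc p by blast
  then obtain p1 p2 where "p = p1 @ b # p2" "dpath V A (p1 @ [b]) s b" using dpath_split[OF p] by blast
  then show "a \<in> set p" using ab by auto
qed

lemma domD_antisym:
  assumes "domD V A s a b" "domD V A s b a" "dpath V A p s b" shows "a = b"
proof -
  have "a \<in> set p" using assms(1,3) unfolding domD_def by blast
  then obtain p1 p2 where pe: "p = p1 @ a # p2" and pr: "dpath V A (p1 @ [a]) s a" using dpath_split[OF assms(3)] by blast
  have "b \<in> set (p1 @ [a])" using assms(2) pr unfolding domD_def by blast
  moreover have "b = last p" "distinct p" using assms(3) unfolding dpath_walk by auto
  ultimately show ?thesis using pe by (cases p2 rule: rev_cases) auto
qed



lemma chain_step:
  assumes cd: "cut_decomp V A s N par B" and AV: "A \<subseteq> V \<times> V" and dp: "degenerate_path N par B s xs"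
    and k: "Suc k < length xs"
  shows "domD V A s (xs!k) (xs!Suc k) \<and> xs!k \<noteq> xs!Suc k"
proof -
  have "(xs!k, xs!Suc k) \<in> tree_edges N par s" using dp k unfolding degenerate_path_def by blast
  then obtain c where c: "xs!k = par c" "xs!Suc k = c" "c \<in> N - {s}" unfolding tree_edges_def by blast
  then show ?thesis using cd_dom[OF cd AV] unfolding domD_def by metis
qed

lemma chain_le:
  assumes cd: "cut_decomp V A s N par B" and AV: "A \<subseteq> V \<times> V" and dp: "degenerate_path N par B s xs"
  shows "i \<le> j \<Longrightarrow> j < length xs \<Longrightarrow> domD V A s (xs!i) (xs!j)"
proof (induction j)
  case 0 then show ?case by (simp add: domD_refl)
next
  case (Suc j)
  show ?case
  proof (cases "i = Suc j")
    case True then show ?thesis by (simp add: domD_refl)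
  next
    case False
    then have "domD V A s (xs!i) (xs!j)" using Suc by simp
    moreover have "domD V A s (xs!j) (xs!Suc j)" using chain_step[OF cd AV dp] Suc.prems by blast
    ultimately show ?thesis using domD_trans by metis
  qed
qed

lemma chain_distinct:
  assumes cd: "cut_decomp V A s N par B" and AV: "A \<subseteq> V \<times> V" and dp: "degenerate_path N par B s xs"
    and ij: "i < j" "j < length xs"
  shows "xs!i \<noteq> xs!j"
proof
  assume eq: "xs!i = xs!j"
  have st: "domD V A s (xs!i) (xs!Suc i)" "xs!i \<noteq> xs!Suc i" using chain_step[OF cd AV dp, of i] ij by auto
  have "domD V A s (xs!Suc i) (xs!j)" using chain_le[OF cd AV dp, of "Suc i" j] ij by simp
  then have d2: "domD V A s (xs!Suc i) (xs!i)" using eq by simp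
  have "Suc i < length xs" using ij by simp
  then have "xs!Suc i \<in> set xs" by simp
  then have "xs!Suc i \<in> N" using dp unfolding degenerate_path_def by blast
  then have "xs!Suc i \<in> V" using cd_dom[OF cd AV] by blast
  moreover have "\<forall>v\<in>V. \<exists>p. dpath V A p s v" using cd by (cases rule: cut_decomp.cases) auto
  ultimately obtain p where "dpath V A p s (xs!Suc i)" by blast
  then have "xs!i = xs!Suc i" using domD_antisym[OF st(1) d2] by blast
  then show False using st(2) by simp
qed

lemma ob_mono: "out_branching V A' s T \<Longrightarrow> A' \<subseteq> A \<Longrightarrow> out_branching V A s T"
  unfolding out_branching_def by blast

lemma ib_mono: "in_branching V A' s T \<Longrightarrow> A' \<subseteq> A \<Longrightarrow> in_branching V A s T"
  unfolding in_branching_def by blast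

theorem lemma15:
  fixes V :: "'a set" and A :: "('a \<times> 'a) set" and s t u :: 'a and k :: int
    and N :: "'a set" and par :: "'a \<Rightarrow> 'a" and B :: "'a \<Rightarrow> 'a set"
    and xs :: "'a list" and i j :: nat
  assumes "digraph V A" and "s \<in> V" and "t \<in> V"
    and "reduced_instance V A s t"
    and "cut_decomp V A s N par B"
    and "degenerate_path N par B s xs"
    and "i < j" and "j < length xs"
    and "(xs ! i, u) \<in> Aplus A N par B s xs \<inter> R_t V A t"
    and "(xs ! j, u) \<in> Aplus A N par B s xs \<inter> R_t V A t"
  shows "positive_instance V A s t k \<longleftrightarrow> positive_instance V (A - {(xs ! j, u)}) s t k"
proof
  assume "positive_instance V (A - {(xs ! j, u)}) s t k"
  then obtain Tp Tm where "out_branching V (A - {(xs ! j, u)}) s Tp" "in_branching V (A - {(xs ! j, u)}) t Tm"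
    "int (card (Tp - Tm)) \<ge> k" unfolding positive_instance_def by blast
  moreover have "A - {(xs ! j, u)} \<subseteq> A" by blast
  ultimately have "out_branching V A s Tp" "in_branching V A t Tm" "int (card (Tp - Tm)) \<ge> k"
    using ob_mono ib_mono by metis+
  then show "positive_instance V A s t k" unfolding positive_instance_def by blast
next
  assume "positive_instance V A s t k"
  then obtain Tp Tm where ob: "out_branching V A s Tp" and ib: "in_branching V A t Tm"
    and ck: "int (card (Tp - Tm)) \<ge> k" unfolding positive_instance_def by blast
  define xi where "xi = xs ! i"
  define xj where "xj = xs ! j"
  have AV: "A \<subseteq> V \<times> V" using assms(1) unfolding digraph_def by auto
  have eAp: "(xj,u) \<in> Aplus A N par B s xs" and eRt: "(xj,u) \<in> R_t V A t"
    using assms(10) unfolding xj_def by blast+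
  have e'Ap: "(xi,u) \<in> Aplus A N par B s xs" and e'Rt: "(xi,u) \<in> R_t V A t"
    using assms(9) unfolding xi_def by blast+
  have eA: "(xj,u) \<in> A" using eAp unfolding Aplus_def by blast
  have e'A: "(xi,u) \<in> A" using e'Ap unfolding Aplus_def by blast
  have eTm: "(xj,u) \<notin> Tm" using eRt ib unfolding R_t_def by blast
  have e'Tm: "(xi,u) \<notin> Tm" using e'Rt ib unfolding R_t_def by blast
  have ib': "in_branching V (A - {(xj,u)}) t Tm" using ib eTm unfolding in_branching_def by blast
  show "positive_instance V (A - {(xs ! j, u)}) s t k"
  proof (cases "(xj,u) \<in> Tp")
    case False
    then have "out_branching V (A - {(xj,u)}) s Tp" using ob unfolding out_branching_def by blast
    then show ?thesis using ib' ck unfolding positive_instance_def xj_def by blast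
  next
    case True
    have xij: "xi \<noteq> xj" using chain_distinct[OF assms(5) AV assms(6) assms(7,8)] unfolding xi_def xj_def .
    have xjV: "xj \<in> V" using eA AV by auto
    obtain p where p: "dpath V Tp p s xj" and pr: "\<forall>z\<in>set p. (z,xj) \<in> Tp\<^sup>*" using ob_path[OF ob xjV] by blast
    have "dpath V A p s xj" using dpath_mono[OF p ob_props(1)[OF ob]] .
    moreover have "domD V A s xi xj" using chain_le[OF assms(5) AV assms(6), of i j] assms(7,8)
      unfolding xi_def xj_def by simp
    ultimately have "xi \<in> set p" unfolding domD_def by blast
    then have xixj: "(xi,xj) \<in> Tp\<^sup>*" using pr by blast
    have na: "(u,xi) \<notin> Tp\<^sup>*"
    proof
      assume "(u,xi) \<in> Tp\<^sup>*"
      then have "(u,xj) \<in> Tp\<^sup>*" using xixj by simp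
      then have "(u,u) \<in> Tp\<^sup>+" using True by (rule rtrancl_into_trancl1)
      then show False using ob_acyclic[OF ob] by blast
    qed
    have sw: "out_branching V (A - {(xj,u)}) s (insert (xi,u) (Tp - {(xj,u)})) \<and> (xi,u) \<notin> Tp"
      using swap_branching[OF ob assms(1) True e'A xij na] .
    have fin: "finite (Tp - Tm)" using ob_props(3)[OF ob] by simp
    have eq: "insert (xi,u) (Tp - {(xj,u)}) - Tm = insert (xi,u) ((Tp - Tm) - {(xj,u)})" using e'Tm by auto
    have "card (insert (xi,u) ((Tp - Tm) - {(xj,u)})) = Suc (card ((Tp - Tm) - {(xj,u)}))"
      using fin sw by simp
    also have "\<dots> = card (Tp - Tm)"
    proof -
      have m: "(xj,u) \<in> Tp - Tm" using True eTm by simp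
      then have "card (Tp - Tm) > 0" using fin card_gt_0_iff by blast
      moreover have "card ((Tp - Tm) - {(xj,u)}) = card (Tp - Tm) - 1" using m by (rule card_Diff_singleton)
      ultimately show ?thesis by simp
    qed
    finally have "card (insert (xi,u) (Tp - {(xj,u)}) - Tm) = card (Tp - Tm)" using eq by simp
    then have "out_branching V (A - {(xj,u)}) s (insert (xi,u) (Tp - {(xj,u)})) \<and>
      in_branching V (A - {(xj,u)}) t Tm \<and> int (card (insert (xi,u) (Tp - {(xj,u)}) - Tm)) \<ge> k"
      using sw ib' ck by simp
    then show ?thesis unfolding positive_instance_def xj_def by blast
  qed
qed


end
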